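(* Let $R$ be a commutative ring with unit, $M$ an $R$-module, $N$ a submodule of $M$, $\mathbf A$ a $k\times l$ matrix with entries in $R$, and $r,s\ge1$ integers. (1) If $\mathbf A$ is partition regular over $M$ for $r+s$ colours, then either $\mathbf A$ is partition regular over $N$ for $r$ colours or $\mathbf A$ is partition regular over $M/N$ for $s$ colours. (2) If $M=\bigoplus_{i=1}^t M_i$ is a direct sum of finitely many $R$-modules $M_i$, then $\mathbf A$ is partition regular over $M$ if and only if $\mathbf A$ is partition regular over some $M_i$.
   Context: $\mathbf{A}$ is partition regular over an $R$-module $P$ for $r$ colours if for every map $\chi\colon P\to\{1,\dots,r\}$ there is $\mathbf{p}=(p_1,\dots,p_l)^{\intercal}\in P^l$ with $\mathbf{A}\mathbf{p}=0$, $\mathbf{p}\neq 0$ and $\chi(p_1)=\dots=\chi(p_l)$; it is partition regular over $P$ if this holds for every $r\ge1$. *)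

theory Defs
  imports "HOL-Algebra.Module" "HOL-Algebra.QuotRing" "HOL-Library.FuncSet"
begin

text \<open>A k x l matrix over R is a function A :: nat => nat => 'a with entries A i j in carrier R
  for i < k, j < l; a vector in P^l is a function p :: nat => 'b with p j in carrier P for j < l.\<close>

definition partition_regular_colours ::
  "('a, 'b) module \<Rightarrow> (nat \<Rightarrow> nat \<Rightarrow> 'a) \<Rightarrow> nat \<Rightarrow> nat \<Rightarrow> nat \<Rightarrow> bool" where
  "partition_regular_colours P A k l r \<longleftrightarrow>
     (\<forall>\<chi> \<in> carrier P \<rightarrow> {1..r}. \<exists>p.
        (\<forall>j<l. p j \<in> carrier P) \<and>
        (\<forall>i<k. (\<Oplus>\<^bsub>P\<^esub> j\<in>{..<l}. A i j \<odot>\<^bsub>P\<^esub> p j) = \<zero>\<^bsub>P\<^esub>) \<and>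
        (\<exists>j<l. p j \<noteq> \<zero>\<^bsub>P\<^esub>) \<and>
        (\<forall>j<l. \<forall>j'<l. \<chi> (p j) = \<chi> (p j')))"

definition partition_regular ::
  "('a, 'b) module \<Rightarrow> (nat \<Rightarrow> nat \<Rightarrow> 'a) \<Rightarrow> nat \<Rightarrow> nat \<Rightarrow> bool" where
  "partition_regular P A k l \<longleftrightarrow> (\<forall>r\<ge>1. partition_regular_colours P A k l r)"

definition submodule_module :: "('a, 'b) module \<Rightarrow> 'b set \<Rightarrow> ('a, 'b) module" where
  "submodule_module M N = M\<lparr>carrier := N\<rparr>"

text \<open>The quotient module M/N: cosets N +> x, with coset addition and
  a . (N +> x) = N +> (a . x). Ring-multiplication fields are irrelevant.\<close>
definition quotient_module :: "('a, 'b) module \<Rightarrow> 'b set \<Rightarrow> ('a, 'b set) module" where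
  "quotient_module M N =
     \<lparr>carrier = a_rcosets\<^bsub>M\<^esub> N, mult = (\<lambda>X Y. undefined), one = undefined,
      zero = N, add = set_add M,
      smult = (\<lambda>a X. \<Union>x\<in>X. N +>\<^bsub>M\<^esub> (a \<odot>\<^bsub>M\<^esub> x))\<rparr>"

definition is_direct_sum :: "('a, 'b) module \<Rightarrow> (nat \<Rightarrow> 'b set) \<Rightarrow> nat set \<Rightarrow> bool" where
  "is_direct_sum M Ms I \<longleftrightarrow>
     (\<forall>i\<in>I. Ms i \<subseteq> carrier M) \<and>
     (\<forall>x\<in>carrier M. \<exists>!y. y \<in> (\<Pi>\<^sub>E i\<in>I. Ms i) \<and> x = (\<Oplus>\<^bsub>M\<^esub> i\<in>I. y i))"

end

theory Submission
  imports Defs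
begin


lemma sub_finsum:
  fixes M :: "('a,'b) module"
  assumes "module R M" "submodule N R M" "finite S" "f \<in> S \<rightarrow> N"
  shows "finsum (submodule_module M N) f S = finsum M f S"
proof -
  interpret M: module R M by fact
  interpret N: module R "M\<lparr>carrier := N\<rparr>" using submodule.submodule_is_module[OF assms(2,1)] .
  have sub: "N \<subseteq> carrier M" using M.submoduleE(1)[OF assms(2)] .
  have "finsum (M\<lparr>carrier := N\<rparr>) f S = finsum M f S"
  using assms(3,4)
  proof (induction S rule: finite_induct)
    case empty
    then show ?case using N.finsum_empty M.finsum_empty by simp
  next
    case (insert x F)
    have "finsum (M\<lparr>carrier := N\<rparr>) f (insert x F) = f x \<oplus>\<^bsub>M\<lparr>carrier := N\<rparr>\<^esub> finsum (M\<lparr>carrier := N\<rparr>) f F"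
      using insert by (intro N.finsum_insert) auto
    also have "\<dots> = f x \<oplus>\<^bsub>M\<^esub> finsum M f F" using insert by simp
    also have "\<dots> = finsum M f (insert x F)"
      using insert sub by (intro M.finsum_insert[symmetric]) auto
    finally show ?case .
  qed
  then show ?thesis by (simp add: submodule_module_def)
qed

lemma sub_finsum_closed:
  fixes M :: "('a,'b) module"
  assumes "module R M" "submodule N R M" "finite S" "f \<in> S \<rightarrow> N"
  shows "finsum M f S \<in> N"
proof -
  interpret N: module R "M\<lparr>carrier := N\<rparr>" using submodule.submodule_is_module[OF assms(2,1)] .
  have "finsum (M\<lparr>carrier := N\<rparr>) f S \<in> N" using assms(4) N.finsum_closed by auto
  then show ?thesis using sub_finsum[OF assms] by (simp add: submodule_module_def)
qed

lemma quot_finsum_eq: "finsum (quotient_module M N) g S = finprod (M A_Mod N) g S"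
  unfolding finsum_def finprod_def quotient_module_def A_FactGroup_def FactGroup_def A_RCOSETS_def set_add_def
  by simp

lemma abelian_sub:
  fixes M :: "('a,'b) module"
  assumes "module R M" "submodule N R M"
  shows "abelian_subgroup N M"
proof -
  interpret M: module R M by fact
  show ?thesis
    by (intro abelian_subgroupI3 additive_subgroup.intro) (use assms(2) submodule.axioms(1) M.abelian_group_axioms in auto)
qed

lemma quot_coset_finsum:
  fixes M :: "('a,'b) module"
  assumes "module R M" "submodule N R M" "finite S" "f \<in> S \<rightarrow> carrier M"
  shows "finprod (M A_Mod N) (\<lambda>j. N +>\<^bsub>M\<^esub> f j) S = N +>\<^bsub>M\<^esub> finsum M f S"
proof -
  interpret M: module R M by fact
  have as: "abelian_subgroup N M" using abelian_sub[OF assms(1,2)] .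
  interpret Q: comm_group "M A_Mod N" using abelian_subgroup.a_factorgroup_is_comm_group[OF as] .
  have car: "carrier (M A_Mod N) = a_rcosets\<^bsub>M\<^esub> N"
    by (simp add: A_FactGroup_def FactGroup_def A_RCOSETS_def)
  show ?thesis using assms(3,4)
  proof (induction S rule: finite_induct)
    case empty
    have "N +>\<^bsub>M\<^esub> \<zero>\<^bsub>M\<^esub> = N"
      using M.a_coset_join2[of "\<zero>\<^bsub>M\<^esub>" N] assms(2) submodule.axioms(1) 
      by (metis M.zero_closed additive_subgroup.intro additive_subgroup.zero_closed)
    then show ?case using Q.finprod_empty by (simp add: A_FactGroup_def FactGroup_def)
  next
    case (insert x F)
    have "finprod (M A_Mod N) (\<lambda>j. N +>\<^bsub>M\<^esub> f j) (insert x F) = (N +>\<^bsub>M\<^esub> f x) <+>\<^bsub>M\<^esub> finprod (M A_Mod N) (\<lambda>j. N +>\<^bsub>M\<^esub> f j) F"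
      using insert by (subst Q.finprod_insert) (auto simp: car intro!: M.a_rcosetsI M.submoduleE(1)[OF assms(2)])
    also have "\<dots> = N +>\<^bsub>M\<^esub> (f x \<oplus>\<^bsub>M\<^esub> finsum M f F)"
      using insert by (simp add: abelian_subgroup.a_rcos_sum[OF as])
    also have "\<dots> = N +>\<^bsub>M\<^esub> finsum M f (insert x F)"
      using insert by (subst M.finsum_insert) auto
    finally show ?case .
  qed
qed

lemma quot_smult:
  fixes M :: "('a,'b) module"
  assumes "module R M" "submodule N R M" "a \<in> carrier R" "x \<in> carrier M"
  shows "a \<odot>\<^bsub>quotient_module M N\<^esub> (N +>\<^bsub>M\<^esub> x) = N +>\<^bsub>M\<^esub> (a \<odot>\<^bsub>M\<^esub> x)"
proof -
  interpret M: module R M by fact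
  have as: "abelian_subgroup N M" using abelian_sub[OF assms(1,2)] .
  have sg: "subgroup N (add_monoid M)" using assms(2) submodule.axioms(1) by blast
  have sub: "N \<subseteq> carrier M" using M.submoduleE(1)[OF assms(2)] .
  have eq: "N +>\<^bsub>M\<^esub> (a \<odot>\<^bsub>M\<^esub> y) = N +>\<^bsub>M\<^esub> (a \<odot>\<^bsub>M\<^esub> x)" if y: "y \<in> N +>\<^bsub>M\<^esub> x" for y
  proof -
    obtain n where n: "n \<in> N" "y = n \<oplus>\<^bsub>M\<^esub> x" using y unfolding a_r_coset_def' by blast
    have "a \<odot>\<^bsub>M\<^esub> y = a \<odot>\<^bsub>M\<^esub> n \<oplus>\<^bsub>M\<^esub> a \<odot>\<^bsub>M\<^esub> x"
      using n sub assms by (simp add: M.smult_r_distr subsetD)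
    moreover have "a \<odot>\<^bsub>M\<^esub> n \<in> N" using M.submoduleE(4)[OF assms(2)] n assms(3) by blast
    ultimately have "a \<odot>\<^bsub>M\<^esub> y \<in> N +>\<^bsub>M\<^esub> (a \<odot>\<^bsub>M\<^esub> x)" unfolding a_r_coset_def' by blast
    then show ?thesis using M.a_repr_independence[OF _ _ sg] assms by (metis M.smult_closed)
  qed
  have "x \<in> N +>\<^bsub>M\<^esub> x" using abelian_subgroup.a_rcos_self[OF as] assms(4) .
  then have "(\<Union>y\<in>N +>\<^bsub>M\<^esub> x. N +>\<^bsub>M\<^esub> (a \<odot>\<^bsub>M\<^esub> y)) = N +>\<^bsub>M\<^esub> (a \<odot>\<^bsub>M\<^esub> x)"
    using eq by blast
  then show ?thesis unfolding quotient_module_def by simp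
qed


lemma part1:
  fixes M :: "('a,'b) module"
  assumes "module R M" "submodule N R M" "\<forall>i<k. \<forall>j<l. A i j \<in> carrier R"
    and pr: "partition_regular_colours M A k l (r + s)"
  shows "partition_regular_colours (submodule_module M N) A k l r \<or>
            partition_regular_colours (quotient_module M N) A k l s"
proof (rule ccontr)
  interpret M: module R M by fact
  have as: "abelian_subgroup N M" using abelian_sub[OF assms(1,2)] .
  have sg: "subgroup N (add_monoid M)" using assms(2) submodule.axioms(1) by blast
  have sub: "N \<subseteq> carrier M" using M.submoduleE(1)[OF assms(2)] .
  assume "\<not> ?thesis"
  then have n1: "\<not> partition_regular_colours (submodule_module M N) A k l r"
    and n2: "\<not> partition_regular_colours (quotient_module M N) A k l s" by auto
  obtain \<psi> where psi0: "\<psi> \<in> carrier (submodule_module M N) \<rightarrow> {1..r}" and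
    psibad0: "\<not> (\<exists>p. (\<forall>j<l. p j \<in> carrier (submodule_module M N)) \<and>
        (\<forall>i<k. (\<Oplus>\<^bsub>submodule_module M N\<^esub> j\<in>{..<l}. A i j \<odot>\<^bsub>submodule_module M N\<^esub> p j) = \<zero>\<^bsub>submodule_module M N\<^esub>) \<and>
        (\<exists>j<l. p j \<noteq> \<zero>\<^bsub>submodule_module M N\<^esub>) \<and>
        (\<forall>j<l. \<forall>j'<l. \<psi> (p j) = \<psi> (p j')))"
    using n1 unfolding partition_regular_colours_def by blast
  obtain \<chi> where chi: "\<chi> \<in> carrier (quotient_module M N) \<rightarrow> {1..s}" and
    chibad0: "\<not> (\<exists>p. (\<forall>j<l. p j \<in> carrier (quotient_module M N)) \<and>
        (\<forall>i<k. (\<Oplus>\<^bsub>quotient_module M N\<^esub> j\<in>{..<l}. A i j \<odot>\<^bsub>quotient_module M N\<^esub> p j) = \<zero>\<^bsub>quotient_module M N\<^esub>) \<and>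
        (\<exists>j<l. p j \<noteq> \<zero>\<^bsub>quotient_module M N\<^esub>) \<and>
        (\<forall>j<l. \<forall>j'<l. \<chi> (p j) = \<chi> (p j')))"
    using n2 unfolding partition_regular_colours_def by blast
  have carN: "carrier (submodule_module M N) = N" by (simp add: submodule_module_def)
  have psi: "\<psi> \<in> N \<rightarrow> {1..r}" using psi0 by (simp add: submodule_module_def)
  have psibad: False if "(\<forall>j<l. p j \<in> N)"
        "(\<forall>i<k. (\<Oplus>\<^bsub>submodule_module M N\<^esub> j\<in>{..<l}. A i j \<odot>\<^bsub>submodule_module M N\<^esub> p j) = \<zero>\<^bsub>submodule_module M N\<^esub>)"
        "(\<exists>j<l. p j \<noteq> \<zero>\<^bsub>submodule_module M N\<^esub>)"
        "(\<forall>j<l. \<forall>j'<l. \<psi> (p j) = \<psi> (p j'))" for p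
    using psibad0 that unfolding carN by blast
  have chibad: False if "(\<forall>j<l. p j \<in> carrier (quotient_module M N))"
        "(\<forall>i<k. (\<Oplus>\<^bsub>quotient_module M N\<^esub> j\<in>{..<l}. A i j \<odot>\<^bsub>quotient_module M N\<^esub> p j) = \<zero>\<^bsub>quotient_module M N\<^esub>)"
        "(\<exists>j<l. p j \<noteq> \<zero>\<^bsub>quotient_module M N\<^esub>)"
        "(\<forall>j<l. \<forall>j'<l. \<chi> (p j) = \<chi> (p j'))" for p
    using chibad0 that by blast
  define col where "col x = (if x \<in> N then \<psi> x else r + \<chi> (N +>\<^bsub>M\<^esub> x))" for x
  have qcar: "N +>\<^bsub>M\<^esub> x \<in> carrier (quotient_module M N)" if "x \<in> carrier M" for x
    using that by (simp add: quotient_module_def M.a_rcosetsI sub)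
  have colfun: "col \<in> carrier M \<rightarrow> {1..r+s}"
  proof
    fix x assume x: "x \<in> carrier M"
    show "col x \<in> {1..r+s}"
    proof (cases "x \<in> N")
      case True
      then have "\<psi> x \<in> {1..r}" using psi by blast
      then show ?thesis using True unfolding col_def by simp
    next
      case False
      then have "\<chi> (N +>\<^bsub>M\<^esub> x) \<in> {1..s}" using chi qcar[OF x] by blast
      then show ?thesis using False unfolding col_def by simp
    qed
  qed
  have "\<exists>p. (\<forall>j<l. p j \<in> carrier M) \<and>
     (\<forall>i<k. (\<Oplus>\<^bsub>M\<^esub> j\<in>{..<l}. A i j \<odot>\<^bsub>M\<^esub> p j) = \<zero>\<^bsub>M\<^esub>) \<and>
     (\<exists>j<l. p j \<noteq> \<zero>\<^bsub>M\<^esub>) \<and> (\<forall>j<l. \<forall>j'<l. col (p j) = col (p j'))"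
    using pr colfun unfolding partition_regular_colours_def by (rule bspec)
  then obtain p where p: "\<forall>j<l. p j \<in> carrier M"
     "\<forall>i<k. (\<Oplus>\<^bsub>M\<^esub> j\<in>{..<l}. A i j \<odot>\<^bsub>M\<^esub> p j) = \<zero>\<^bsub>M\<^esub>"
     "\<exists>j<l. p j \<noteq> \<zero>\<^bsub>M\<^esub>" "\<forall>j<l. \<forall>j'<l. col (p j) = col (p j')"
    by blast
  obtain j0 where j0: "j0 < l" "p j0 \<noteq> \<zero>\<^bsub>M\<^esub>" using p(3) by blast
  show False
  proof (cases "p j0 \<in> N")
    case True
    have "col (p j0) \<le> r" using True psi by (auto simp: col_def)
    have allN: "\<forall>j<l. p j \<in> N"
    proof (intro allI impI)
      fix j assume "j < l"
      then have "col (p j) = col (p j0)" using p(4) j0 by blast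
      then have "col (p j) \<le> r" using \<open>col (p j0) \<le> r\<close> by simp
      show "p j \<in> N"
      proof (rule ccontr)
        assume "p j \<notin> N"
        then have "col (p j) = r + \<chi> (N +>\<^bsub>M\<^esub> p j)" "\<chi> (N +>\<^bsub>M\<^esub> p j) \<in> {1..s}"
          using chi qcar p(1) \<open>j < l\<close> unfolding col_def by auto
        then show False using \<open>col (p j) \<le> r\<close> by simp
      qed
    qed
    show False
    proof (rule psibad[of p])
      show "\<forall>j<l. p j \<in> N" by fact
      show "\<forall>i<k. (\<Oplus>\<^bsub>submodule_module M N\<^esub> j\<in>{..<l}. A i j \<odot>\<^bsub>submodule_module M N\<^esub> p j) = \<zero>\<^bsub>submodule_module M N\<^esub>"
      proof (intro allI impI)
        fix i assume "i < k"
        have "(\<Oplus>\<^bsub>submodule_module M N\<^esub> j\<in>{..<l}. A i j \<odot>\<^bsub>submodule_module M N\<^esub> p j) =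
              (\<Oplus>\<^bsub>M\<^esub> j\<in>{..<l}. A i j \<odot>\<^bsub>M\<^esub> p j)"
          using sub_finsum[OF assms(1,2), of "{..<l}" "\<lambda>j. A i j \<odot>\<^bsub>M\<^esub> p j"]
            allN assms(3) \<open>i < k\<close> M.submoduleE(4)[OF assms(2)]
          by (auto simp: submodule_module_def)
        then show "(\<Oplus>\<^bsub>submodule_module M N\<^esub> j\<in>{..<l}. A i j \<odot>\<^bsub>submodule_module M N\<^esub> p j) = \<zero>\<^bsub>submodule_module M N\<^esub>"
          using p(2) \<open>i < k\<close> by (simp add: submodule_module_def)
      qed
      show "\<exists>j<l. p j \<noteq> \<zero>\<^bsub>submodule_module M N\<^esub>" using j0 by (auto simp: submodule_module_def)
      show "\<forall>j<l. \<forall>j'<l. \<psi> (p j) = \<psi> (p j')"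
      proof (intro allI impI)
        fix j j' assume jj: "j < l" "j' < l"
        then have "col (p j) = col (p j')" using p(4) by blast
        then show "\<psi> (p j) = \<psi> (p j')" using allN jj unfolding col_def by simp
      qed
    qed
  next
    case False
    have "col (p j0) = r + \<chi> (N +>\<^bsub>M\<^esub> p j0)" "\<chi> (N +>\<^bsub>M\<^esub> p j0) \<in> {1..s}"
      using False chi qcar p(1) j0 unfolding col_def by auto
    then have "col (p j0) > r" by simp
    have allN: "\<forall>j<l. p j \<notin> N"
    proof (intro allI impI)
      fix j assume "j < l"
      then have "col (p j) = col (p j0)" using p(4) j0 by blast
      then have c: "col (p j) > r" using \<open>col (p j0) > r\<close> by simp
      show "p j \<notin> N"
      proof
        assume "p j \<in> N"
        then have "col (p j) = \<psi> (p j)" "\<psi> (p j) \<in> {1..r}" using psi unfolding col_def by auto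
        then show False using c by simp
      qed
    qed
    show False
    proof (rule chibad[of "\<lambda>j. N +>\<^bsub>M\<^esub> p j"])
      show "\<forall>j<l. N +>\<^bsub>M\<^esub> p j \<in> carrier (quotient_module M N)" using qcar p(1) by blast
      show "\<forall>i<k. (\<Oplus>\<^bsub>quotient_module M N\<^esub> j\<in>{..<l}. A i j \<odot>\<^bsub>quotient_module M N\<^esub> (N +>\<^bsub>M\<^esub> p j)) = \<zero>\<^bsub>quotient_module M N\<^esub>"
      proof (intro allI impI)
        fix i assume "i < k"
        interpret Q: comm_group "M A_Mod N" using abelian_subgroup.a_factorgroup_is_comm_group[OF as] .
        have carQ: "carrier (M A_Mod N) = a_rcosets\<^bsub>M\<^esub> N"
          by (simp add: A_FactGroup_def FactGroup_def A_RCOSETS_def)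
        have pe: "A i j \<odot>\<^bsub>M\<^esub> p j \<in> carrier M" if "j \<in> {..<l}" for j
          using assms(3) \<open>i < k\<close> p(1) that by simp
        have "(\<Oplus>\<^bsub>quotient_module M N\<^esub> j\<in>{..<l}. A i j \<odot>\<^bsub>quotient_module M N\<^esub> (N +>\<^bsub>M\<^esub> p j)) =
              finprod (M A_Mod N) (\<lambda>j. N +>\<^bsub>M\<^esub> (A i j \<odot>\<^bsub>M\<^esub> p j)) {..<l}"
          unfolding quot_finsum_eq
        proof (rule Q.finprod_cong')
          show "(\<lambda>j. N +>\<^bsub>M\<^esub> (A i j \<odot>\<^bsub>M\<^esub> p j)) \<in> {..<l} \<rightarrow> carrier (M A_Mod N)"
            using pe by (auto simp: carQ intro!: M.a_rcosetsI sub)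
          fix j assume "j \<in> {..<l}"
          then show "A i j \<odot>\<^bsub>quotient_module M N\<^esub> (N +>\<^bsub>M\<^esub> p j) = N +>\<^bsub>M\<^esub> (A i j \<odot>\<^bsub>M\<^esub> p j)"
            using quot_smult[OF assms(1,2)] assms(3) \<open>i < k\<close> p(1) by simp
        qed simp
        also have "\<dots> = N +>\<^bsub>M\<^esub> (\<Oplus>\<^bsub>M\<^esub> j\<in>{..<l}. A i j \<odot>\<^bsub>M\<^esub> p j)"
          by (rule quot_coset_finsum[OF assms(1,2)]) (use pe in auto)
        also have "\<dots> = N" using p(2) \<open>i < k\<close> M.a_coset_join2[OF _ sg] 
          by (metis M.zero_closed additive_subgroup.intro additive_subgroup.zero_closed sg)
        finally show "(\<Oplus>\<^bsub>quotient_module M N\<^esub> j\<in>{..<l}. A i j \<odot>\<^bsub>quotient_module M N\<^esub> (N +>\<^bsub>M\<^esub> p j)) = \<zero>\<^bsub>quotient_module M N\<^esub>"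
          by (simp add: quotient_module_def)
      qed
      show "\<exists>j<l. N +>\<^bsub>M\<^esub> p j \<noteq> \<zero>\<^bsub>quotient_module M N\<^esub>"
      proof (intro exI conjI)
        show "j0 < l" by fact
        show "N +>\<^bsub>M\<^esub> p j0 \<noteq> \<zero>\<^bsub>quotient_module M N\<^esub>"
          using False M.a_coset_join1[OF _ _ sg] p(1) j0 unfolding quotient_module_def by auto
      qed
      show "\<forall>j<l. \<forall>j'<l. \<chi> (N +>\<^bsub>M\<^esub> p j) = \<chi> (N +>\<^bsub>M\<^esub> p j')"
      proof (intro allI impI)
        fix j j' assume jj: "j < l" "j' < l"
        then have "col (p j) = col (p j')" using p(4) by blast
        then show "\<chi> (N +>\<^bsub>M\<^esub> p j) = \<chi> (N +>\<^bsub>M\<^esub> p j')" using allN jj unfolding col_def by simp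
      qed
    qed
  qed
qed



definition dcomp :: "('a,'b) module \<Rightarrow> (nat \<Rightarrow> 'b set) \<Rightarrow> nat set \<Rightarrow> 'b \<Rightarrow> nat \<Rightarrow> 'b" where
  "dcomp M Ms I x = (THE y. y \<in> (\<Pi>\<^sub>E i\<in>I. Ms i) \<and> x = (\<Oplus>\<^bsub>M\<^esub> i\<in>I. y i))"

lemma dcomp_spec:
  assumes "is_direct_sum M Ms I" "x \<in> carrier M"
  shows "dcomp M Ms I x \<in> (\<Pi>\<^sub>E i\<in>I. Ms i) \<and> x = (\<Oplus>\<^bsub>M\<^esub> i\<in>I. dcomp M Ms I x i)"
proof -
  have "\<exists>!y. y \<in> (\<Pi>\<^sub>E i\<in>I. Ms i) \<and> x = (\<Oplus>\<^bsub>M\<^esub> i\<in>I. y i)"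
    using assms unfolding is_direct_sum_def by blast
  then show ?thesis unfolding dcomp_def by (rule theI')
qed

lemma dcomp_unique:
  assumes "is_direct_sum M Ms I" "x \<in> carrier M" "y \<in> (\<Pi>\<^sub>E i\<in>I. Ms i)" "x = (\<Oplus>\<^bsub>M\<^esub> i\<in>I. y i)"
  shows "dcomp M Ms I x = y"
proof -
  have "\<exists>!y. y \<in> (\<Pi>\<^sub>E i\<in>I. Ms i) \<and> x = (\<Oplus>\<^bsub>M\<^esub> i\<in>I. y i)"
    using assms unfolding is_direct_sum_def by blast
  then have "(THE y. y \<in> (\<Pi>\<^sub>E i\<in>I. Ms i) \<and> x = (\<Oplus>\<^bsub>M\<^esub> i\<in>I. y i)) = y"
    by (rule the1_equality) (use assms(3,4) in blast)
  then show ?thesis unfolding dcomp_def .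
qed

lemma finsum_swap:
  fixes M :: "('a,'b) module"
  assumes "module R M" "finite I" "finite S" "\<And>i j. i \<in> I \<Longrightarrow> j \<in> S \<Longrightarrow> f i j \<in> carrier M"
  shows "(\<Oplus>\<^bsub>M\<^esub> i\<in>I. \<Oplus>\<^bsub>M\<^esub> j\<in>S. f i j) = (\<Oplus>\<^bsub>M\<^esub> j\<in>S. \<Oplus>\<^bsub>M\<^esub> i\<in>I. f i j)"
proof -
  interpret M: module R M by fact
  show ?thesis using assms(3,4)
  proof (induction S rule: finite_induct)
    case empty
    then show ?case by simp
  next
    case (insert x F)
    have "(\<Oplus>\<^bsub>M\<^esub> i\<in>I. \<Oplus>\<^bsub>M\<^esub> j\<in>insert x F. f i j) = (\<Oplus>\<^bsub>M\<^esub> i\<in>I. f i x \<oplus>\<^bsub>M\<^esub> (\<Oplus>\<^bsub>M\<^esub> j\<in>F. f i j))"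
      using insert by (intro M.finsum_cong') (auto simp: M.finsum_insert)
    also have "\<dots> = (\<Oplus>\<^bsub>M\<^esub> i\<in>I. f i x) \<oplus>\<^bsub>M\<^esub> (\<Oplus>\<^bsub>M\<^esub> i\<in>I. \<Oplus>\<^bsub>M\<^esub> j\<in>F. f i j)"
      using insert by (intro M.finsum_addf) auto
    also have "\<dots> = (\<Oplus>\<^bsub>M\<^esub> i\<in>I. f i x) \<oplus>\<^bsub>M\<^esub> (\<Oplus>\<^bsub>M\<^esub> j\<in>F. \<Oplus>\<^bsub>M\<^esub> i\<in>I. f i j)"
      using insert by simp
    also have "\<dots> = (\<Oplus>\<^bsub>M\<^esub> j\<in>insert x F. \<Oplus>\<^bsub>M\<^esub> i\<in>I. f i j)"
      using insert by (subst M.finsum_insert) auto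
    finally show ?case .
  qed
qed

lemma dcomp_lin:
  fixes M :: "('a,'b) module"
  assumes "module R M" "finite I" "\<forall>i\<in>I. submodule (Ms i) R M" "is_direct_sum M Ms I"
    "finite S" "a \<in> S \<rightarrow> carrier R" "p \<in> S \<rightarrow> carrier M"
  shows "dcomp M Ms I (\<Oplus>\<^bsub>M\<^esub> j\<in>S. a j \<odot>\<^bsub>M\<^esub> p j) = (\<lambda>i\<in>I. \<Oplus>\<^bsub>M\<^esub> j\<in>S. a j \<odot>\<^bsub>M\<^esub> dcomp M Ms I (p j) i)"
proof -
  interpret M: module R M by fact
  have sub: "Ms i \<subseteq> carrier M" if "i \<in> I" for i using assms(4) that unfolding is_direct_sum_def by blast
  have sp: "dcomp M Ms I (p j) \<in> (\<Pi>\<^sub>E i\<in>I. Ms i) \<and> p j = (\<Oplus>\<^bsub>M\<^esub> i\<in>I. dcomp M Ms I (p j) i)" if "j \<in> S" for j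
    using dcomp_spec[OF assms(4)] assms(7) that by blast
  have dc: "dcomp M Ms I (p j) i \<in> carrier M" if "j \<in> S" "i \<in> I" for i j
    using sp[OF that(1)] sub[OF that(2)] that(2) by (auto simp: PiE_iff)
  show ?thesis
  proof (rule dcomp_unique[OF assms(4)])
    show "(\<Oplus>\<^bsub>M\<^esub> j\<in>S. a j \<odot>\<^bsub>M\<^esub> p j) \<in> carrier M" using assms(6,7) by (intro M.finsum_closed) auto
    show "(\<lambda>i\<in>I. \<Oplus>\<^bsub>M\<^esub> j\<in>S. a j \<odot>\<^bsub>M\<^esub> dcomp M Ms I (p j) i) \<in> (\<Pi>\<^sub>E i\<in>I. Ms i)"
      unfolding restrict_PiE_iff
    proof
      fix i assume i: "i \<in> I"
      show "(\<Oplus>\<^bsub>M\<^esub> j\<in>S. a j \<odot>\<^bsub>M\<^esub> dcomp M Ms I (p j) i) \<in> Ms i"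
      proof (rule sub_finsum_closed[OF assms(1)])
        show "submodule (Ms i) R M" using assms(3) i by blast
        show "finite S" by fact
        show "(\<lambda>j. a j \<odot>\<^bsub>M\<^esub> dcomp M Ms I (p j) i) \<in> S \<rightarrow> Ms i"
        proof
          fix j assume j: "j \<in> S"
          have "dcomp M Ms I (p j) i \<in> Ms i" using sp[OF j] i by (auto simp: PiE_iff)
          then show "a j \<odot>\<^bsub>M\<^esub> dcomp M Ms I (p j) i \<in> Ms i"
            using M.submoduleE(4)[of "Ms i" "a j"] assms(3,6) i j by blast
        qed
      qed
    qed
    have "(\<Oplus>\<^bsub>M\<^esub> i\<in>I. (\<lambda>i\<in>I. \<Oplus>\<^bsub>M\<^esub> j\<in>S. a j \<odot>\<^bsub>M\<^esub> dcomp M Ms I (p j) i) i)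
        = (\<Oplus>\<^bsub>M\<^esub> i\<in>I. \<Oplus>\<^bsub>M\<^esub> j\<in>S. a j \<odot>\<^bsub>M\<^esub> dcomp M Ms I (p j) i)"
      using assms(6) dc by (intro M.finsum_cong') (auto intro!: M.finsum_closed)
    also have "\<dots> = (\<Oplus>\<^bsub>M\<^esub> j\<in>S. \<Oplus>\<^bsub>M\<^esub> i\<in>I. a j \<odot>\<^bsub>M\<^esub> dcomp M Ms I (p j) i)"
      using assms(6) dc by (intro finsum_swap[OF assms(1,2,5)]) auto
    also have "\<dots> = (\<Oplus>\<^bsub>M\<^esub> j\<in>S. a j \<odot>\<^bsub>M\<^esub> (\<Oplus>\<^bsub>M\<^esub> i\<in>I. dcomp M Ms I (p j) i))"
      using assms(2,6) dc by (intro M.finsum_cong') (auto intro!: M.finsum_smult_ldistr[symmetric] M.finsum_closed)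
    also have "\<dots> = (\<Oplus>\<^bsub>M\<^esub> j\<in>S. a j \<odot>\<^bsub>M\<^esub> p j)"
      using assms(6,7) sp by (intro M.finsum_cong') auto
    finally show "(\<Oplus>\<^bsub>M\<^esub> j\<in>S. a j \<odot>\<^bsub>M\<^esub> p j) = (\<Oplus>\<^bsub>M\<^esub> i\<in>I. (\<lambda>i\<in>I. \<Oplus>\<^bsub>M\<^esub> j\<in>S. a j \<odot>\<^bsub>M\<^esub> dcomp M Ms I (p j) i) i)"
      by simp
  qed
qed

lemma dcomp_nz:
  fixes M :: "('a,'b) module"
  assumes "module R M" "is_direct_sum M Ms I" "x \<in> carrier M" "x \<noteq> \<zero>\<^bsub>M\<^esub>"
  shows "\<exists>i\<in>I. dcomp M Ms I x i \<noteq> \<zero>\<^bsub>M\<^esub>"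
proof (rule ccontr)
  interpret M: module R M by fact
  assume "\<not> ?thesis"
  then have "(\<Oplus>\<^bsub>M\<^esub> i\<in>I. dcomp M Ms I x i) = (\<Oplus>\<^bsub>M\<^esub> i\<in>I. \<zero>\<^bsub>M\<^esub>)"
    by (intro M.finsum_cong') auto
  then show False using dcomp_spec[OF assms(2,3)] assms(4) by simp
qed

lemma enc_inj:
  fixes a b a' b' m :: nat
  assumes "b < m" "b' < m" "a*m+b = a'*m+b'"
  shows "a = a' \<and> b = b'"
proof -
  have "(a*m+b) div m = a" "(a*m+b) mod m = b" "(a'*m+b') div m = a'" "(a'*m+b') mod m = b'"
    using assms(1,2) by simp_all
  moreover have "(a*m+b) div m = (a'*m+b') div m" "(a*m+b) mod m = (a'*m+b') mod m"
    using assms(3) by simp_all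
  ultimately show ?thesis by metis
qed



lemma sub_eqs:
  fixes M :: "('a,'b) module" and A :: "nat \<Rightarrow> nat \<Rightarrow> 'a" and k l :: nat
  assumes "module R M" "submodule N R M" "\<forall>i<k. \<forall>j<l. A i j \<in> carrier R" "\<forall>j<l. p j \<in> N"
  shows "(\<forall>i<k. (\<Oplus>\<^bsub>submodule_module M N\<^esub> j\<in>{..<l}. A i j \<odot>\<^bsub>submodule_module M N\<^esub> p j) = \<zero>\<^bsub>submodule_module M N\<^esub>)
     \<longleftrightarrow> (\<forall>i<k. (\<Oplus>\<^bsub>M\<^esub> j\<in>{..<l}. A i j \<odot>\<^bsub>M\<^esub> p j) = \<zero>\<^bsub>M\<^esub>)"
proof -
  interpret M: module R M by fact
  have "(\<Oplus>\<^bsub>submodule_module M N\<^esub> j\<in>{..<l}. A i j \<odot>\<^bsub>submodule_module M N\<^esub> p j) = (\<Oplus>\<^bsub>M\<^esub> j\<in>{..<l}. A i j \<odot>\<^bsub>M\<^esub> p j)"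
    if "i < k" for i
  proof -
    have "(\<Oplus>\<^bsub>submodule_module M N\<^esub> j\<in>{..<l}. A i j \<odot>\<^bsub>M\<^esub> p j) = (\<Oplus>\<^bsub>M\<^esub> j\<in>{..<l}. A i j \<odot>\<^bsub>M\<^esub> p j)"
    proof (rule sub_finsum[OF assms(1,2)])
      show "(\<lambda>j. A i j \<odot>\<^bsub>M\<^esub> p j) \<in> {..<l} \<rightarrow> N"
        using assms(3,4) that M.submoduleE(4)[OF assms(2)] by blast
    qed simp
    then show ?thesis by (simp add: submodule_module_def)
  qed
  then show ?thesis by (simp add: submodule_module_def)
qed



lemma part2_hard:
  fixes M :: "('a,'b) module" and A :: "nat \<Rightarrow> nat \<Rightarrow> 'a" and k l t :: nat
  assumes modM: "module R M" and Ar: "\<forall>i<k. \<forall>j<l. A i j \<in> carrier R"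
   and subs: "\<forall>i\<in>{1..t}. submodule (Ms i) R M" and ds: "is_direct_sum M Ms {1..t}"
   and none: "\<forall>i\<in>{1..t}. \<not> partition_regular (submodule_module M (Ms i)) A k l"
  shows "\<not> partition_regular M A k l"
proof -
  interpret M: module R M by fact
  have fin: "finite {1..t}" by simp
  have ex: "\<exists>r::nat. r \<ge> 1 \<and> (\<exists>\<chi>. \<chi> \<in> Ms i \<rightarrow> {1..r} \<and> (\<forall>p. (\<forall>j<l. p j \<in> Ms i) \<longrightarrow>
      (\<forall>i'<k. (\<Oplus>\<^bsub>M\<^esub> j\<in>{..<l}. A i' j \<odot>\<^bsub>M\<^esub> p j) = \<zero>\<^bsub>M\<^esub>) \<longrightarrow> (\<exists>j<l. p j \<noteq> \<zero>\<^bsub>M\<^esub>) \<longrightarrow>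
      \<not> (\<forall>j<l. \<forall>j'<l. \<chi> (p j) = \<chi> (p j'))))" if i: "i \<in> {1..t}" for i
  proof -
    have si: "submodule (Ms i) R M" using subs i by blast
    obtain r where r: "r \<ge> 1" "\<not> partition_regular_colours (submodule_module M (Ms i)) A k l r"
      using none i unfolding partition_regular_def by blast
    obtain \<chi> where chi: "\<chi> \<in> carrier (submodule_module M (Ms i)) \<rightarrow> {1..r}" and
      nop: "\<not> (\<exists>p. (\<forall>j<l. p j \<in> carrier (submodule_module M (Ms i))) \<and>
        (\<forall>i'<k. (\<Oplus>\<^bsub>submodule_module M (Ms i)\<^esub> j\<in>{..<l}. A i' j \<odot>\<^bsub>submodule_module M (Ms i)\<^esub> p j) = \<zero>\<^bsub>submodule_module M (Ms i)\<^esub>) \<and>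
        (\<exists>j<l. p j \<noteq> \<zero>\<^bsub>submodule_module M (Ms i)\<^esub>) \<and>
        (\<forall>j<l. \<forall>j'<l. \<chi> (p j) = \<chi> (p j')))"
      using r(2) unfolding partition_regular_colours_def by blast
    have car: "carrier (submodule_module M (Ms i)) = Ms i" and z: "\<zero>\<^bsub>submodule_module M (Ms i)\<^esub> = \<zero>\<^bsub>M\<^esub>"
      by (simp_all add: submodule_module_def)
    have chi': "\<chi> \<in> Ms i \<rightarrow> {1..r}" using chi car by simp
    have bad: "\<forall>p. (\<forall>j<l. p j \<in> Ms i) \<longrightarrow>
      (\<forall>i'<k. (\<Oplus>\<^bsub>M\<^esub> j\<in>{..<l}. A i' j \<odot>\<^bsub>M\<^esub> p j) = \<zero>\<^bsub>M\<^esub>) \<longrightarrow> (\<exists>j<l. p j \<noteq> \<zero>\<^bsub>M\<^esub>) \<longrightarrow>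
      \<not> (\<forall>j<l. \<forall>j'<l. \<chi> (p j) = \<chi> (p j'))"
    proof (intro allI impI notI)
      fix p assume p1: "\<forall>j<l. p j \<in> Ms i" and p2: "\<forall>i'<k. (\<Oplus>\<^bsub>M\<^esub> j\<in>{..<l}. A i' j \<odot>\<^bsub>M\<^esub> p j) = \<zero>\<^bsub>M\<^esub>"
        and p3: "\<exists>j<l. p j \<noteq> \<zero>\<^bsub>M\<^esub>" and p4: "\<forall>j<l. \<forall>j'<l. \<chi> (p j) = \<chi> (p j')"
      have "(\<forall>i'<k. (\<Oplus>\<^bsub>submodule_module M (Ms i)\<^esub> j\<in>{..<l}. A i' j \<odot>\<^bsub>submodule_module M (Ms i)\<^esub> p j) = \<zero>\<^bsub>submodule_module M (Ms i)\<^esub>)"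
        using sub_eqs[OF modM si Ar p1] p2 by blast
      then show False using nop p1 p3 p4 unfolding car z by blast
    qed
    show ?thesis using r(1) chi' bad by blast
  qed
  then have "\<forall>i\<in>{1..t}. \<exists>r::nat. r \<ge> 1 \<and> (\<exists>\<chi>. \<chi> \<in> Ms i \<rightarrow> {1..r} \<and> (\<forall>p. (\<forall>j<l. p j \<in> Ms i) \<longrightarrow>
      (\<forall>i'<k. (\<Oplus>\<^bsub>M\<^esub> j\<in>{..<l}. A i' j \<odot>\<^bsub>M\<^esub> p j) = \<zero>\<^bsub>M\<^esub>) \<longrightarrow> (\<exists>j<l. p j \<noteq> \<zero>\<^bsub>M\<^esub>) \<longrightarrow>
      \<not> (\<forall>j<l. \<forall>j'<l. \<chi> (p j) = \<chi> (p j'))))"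
    by blast
  from bchoice[OF this] obtain rr :: "nat \<Rightarrow> nat" where rr: "\<forall>i\<in>{1..t}. rr i \<ge> 1 \<and> (\<exists>\<chi>. \<chi> \<in> Ms i \<rightarrow> {1..rr i} \<and> (\<forall>p. (\<forall>j<l. p j \<in> Ms i) \<longrightarrow>
      (\<forall>i'<k. (\<Oplus>\<^bsub>M\<^esub> j\<in>{..<l}. A i' j \<odot>\<^bsub>M\<^esub> p j) = \<zero>\<^bsub>M\<^esub>) \<longrightarrow> (\<exists>j<l. p j \<noteq> \<zero>\<^bsub>M\<^esub>) \<longrightarrow>
      \<not> (\<forall>j<l. \<forall>j'<l. \<chi> (p j) = \<chi> (p j'))))"
    by blast
  then have "\<forall>i\<in>{1..t}. \<exists>\<chi>. \<chi> \<in> Ms i \<rightarrow> {1..rr i} \<and> (\<forall>p. (\<forall>j<l. p j \<in> Ms i) \<longrightarrow>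
      (\<forall>i'<k. (\<Oplus>\<^bsub>M\<^esub> j\<in>{..<l}. A i' j \<odot>\<^bsub>M\<^esub> p j) = \<zero>\<^bsub>M\<^esub>) \<longrightarrow> (\<exists>j<l. p j \<noteq> \<zero>\<^bsub>M\<^esub>) \<longrightarrow>
      \<not> (\<forall>j<l. \<forall>j'<l. \<chi> (p j) = \<chi> (p j')))"
    by blast
  from bchoice[OF this] obtain \<chi>\<chi> where chichi: "\<forall>i\<in>{1..t}. \<chi>\<chi> i \<in> Ms i \<rightarrow> {1..rr i} \<and> (\<forall>p. (\<forall>j<l. p j \<in> Ms i) \<longrightarrow>
      (\<forall>i'<k. (\<Oplus>\<^bsub>M\<^esub> j\<in>{..<l}. A i' j \<odot>\<^bsub>M\<^esub> p j) = \<zero>\<^bsub>M\<^esub>) \<longrightarrow> (\<exists>j<l. p j \<noteq> \<zero>\<^bsub>M\<^esub>) \<longrightarrow>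
      \<not> (\<forall>j<l. \<forall>j'<l. \<chi>\<chi> i (p j) = \<chi>\<chi> i (p j')))"
    by blast
  define m where "m = sum rr {1..t}"
  have rr_le: "rr i \<le> m" if "i \<in> {1..t}" for i
    unfolding m_def using fin that by (intro member_le_sum) auto
  have sub: "Ms i \<subseteq> carrier M" if "i \<in> {1..t}" for i
    using ds that unfolding is_direct_sum_def by blast
  define D where "D = dcomp M Ms {1..t}"
  define i0 where "i0 x = (LEAST i. i \<in> {1..t} \<and> D x i \<noteq> \<zero>\<^bsub>M\<^esub>)" for x
  have i0: "i0 x \<in> {1..t} \<and> D x (i0 x) \<noteq> \<zero>\<^bsub>M\<^esub>" if "x \<in> carrier M" "x \<noteq> \<zero>\<^bsub>M\<^esub>" for x
  proof -
    have "\<exists>i. i \<in> {1..t} \<and> D x i \<noteq> \<zero>\<^bsub>M\<^esub>" using dcomp_nz[OF modM ds that] unfolding D_def by blast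
    then show ?thesis unfolding i0_def by (rule LeastI_ex)
  qed
  have Dmem: "D x i \<in> Ms i" if "x \<in> carrier M" "i \<in> {1..t}" for x i
    using dcomp_spec[OF ds that(1)] that(2) unfolding D_def by (auto simp: PiE_iff)
  define c where "c x = \<chi>\<chi> (i0 x) (D x (i0 x))" for x
  have cx: "c x \<in> {1..m}" if "x \<in> carrier M" "x \<noteq> \<zero>\<^bsub>M\<^esub>" for x
  proof -
    have "c x \<in> {1..rr (i0 x)}" using chichi i0[OF that] Dmem[OF that(1)] unfolding c_def by blast
    then show ?thesis using rr_le[of "i0 x"] i0[OF that] by auto
  qed
  define col where "col x = (if x = \<zero>\<^bsub>M\<^esub> then 1 else (i0 x - 1) * m + c x + 1)" for x
  have colfun: "col \<in> carrier M \<rightarrow> {1..t*m+1}"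
  proof
    fix x assume x: "x \<in> carrier M"
    show "col x \<in> {1..t*m+1}"
    proof (cases "x = \<zero>\<^bsub>M\<^esub>")
      case True then show ?thesis unfolding col_def by simp
    next
      case False
      have a: "1 \<le> i0 x" "i0 x \<le> t" using i0[OF x False] by auto
      have b: "c x \<le> m" using cx[OF x False] by auto
      have "(i0 x - 1) * m + c x \<le> (i0 x - 1) * m + m" using b by simp
      also have "\<dots> = i0 x * m" using a(1) by (cases "i0 x") auto
      also have "\<dots> \<le> t * m" using a(2) by (rule mult_le_mono1)
      finally show ?thesis using False unfolding col_def by simp
    qed
  qed
  show ?thesis
    unfolding partition_regular_def
  proof
    assume "\<forall>r\<ge>1. partition_regular_colours M A k l r"
    then have "partition_regular_colours M A k l (t*m+1)" by simp
    then have "\<exists>p. (\<forall>j<l. p j \<in> carrier M) \<and>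
       (\<forall>i<k. (\<Oplus>\<^bsub>M\<^esub> j\<in>{..<l}. A i j \<odot>\<^bsub>M\<^esub> p j) = \<zero>\<^bsub>M\<^esub>) \<and>
       (\<exists>j<l. p j \<noteq> \<zero>\<^bsub>M\<^esub>) \<and> (\<forall>j<l. \<forall>j'<l. col (p j) = col (p j'))"
      using colfun unfolding partition_regular_colours_def by (rule bspec)
    then obtain p where p: "\<forall>j<l. p j \<in> carrier M"
       "\<forall>i<k. (\<Oplus>\<^bsub>M\<^esub> j\<in>{..<l}. A i j \<odot>\<^bsub>M\<^esub> p j) = \<zero>\<^bsub>M\<^esub>"
       "\<exists>j<l. p j \<noteq> \<zero>\<^bsub>M\<^esub>" "\<forall>j<l. \<forall>j'<l. col (p j) = col (p j')"
      by blast
    obtain j0 where j0: "j0 < l" "p j0 \<noteq> \<zero>\<^bsub>M\<^esub>" using p(3) by blast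
    define I0 where "I0 = i0 (p j0)"
    have I0: "I0 \<in> {1..t}" "D (p j0) I0 \<noteq> \<zero>\<^bsub>M\<^esub>" using i0[OF _ j0(2)] p(1) j0(1) unfolding I0_def by auto
    have cj0: "c (p j0) \<in> {1..m}" using cx[OF _ j0(2)] p(1) j0(1) by auto
    have nz: "p j \<noteq> \<zero>\<^bsub>M\<^esub>" and same: "i0 (p j) = I0" and samec: "c (p j) = c (p j0)" if j: "j < l" for j
    proof -
      have eq: "col (p j) = col (p j0)" using p(4) j j0(1) by blast
      have c0: "col (p j0) = (I0 - 1) * m + (c (p j0) - 1) + 2"
        using j0(2) cj0 unfolding col_def I0_def by auto
      show nzj: "p j \<noteq> \<zero>\<^bsub>M\<^esub>"
      proof
        assume "p j = \<zero>\<^bsub>M\<^esub>"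
        then have "col (p j) = 1" unfolding col_def by simp
        then show False using eq c0 by simp
      qed
      have cj: "c (p j) \<in> {1..m}" using cx[OF _ nzj] p(1) j by auto
      have "col (p j) = (i0 (p j) - 1) * m + (c (p j) - 1) + 2"
        using nzj cj unfolding col_def by auto
      then have "(i0 (p j) - 1) * m + (c (p j) - 1) = (I0 - 1) * m + (c (p j0) - 1)"
        using eq c0 by simp
      moreover have "c (p j) - 1 < m" "c (p j0) - 1 < m" using cj cj0 by auto
      ultimately have e: "i0 (p j) - 1 = I0 - 1" "c (p j) - 1 = c (p j0) - 1"
        using enc_inj by blast+
      have "i0 (p j) \<ge> 1" using i0[OF _ nzj] p(1) j by auto
      then show "i0 (p j) = I0" using e(1) I0(1) by auto
      show "c (p j) = c (p j0)" using e(2) cj cj0 by auto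
    qed
    define q where "q j = D (p j) I0" for j
    have q1: "\<forall>j<l. q j \<in> Ms I0" using Dmem p(1) I0(1) unfolding q_def by blast
    have q3: "\<exists>j<l. q j \<noteq> \<zero>\<^bsub>M\<^esub>" using I0(2) j0(1) unfolding q_def by blast
    have q4: "\<forall>j<l. \<forall>j'<l. \<chi>\<chi> I0 (q j) = \<chi>\<chi> I0 (q j')"
    proof (intro allI impI)
      fix j j' assume jj: "j < l" "j' < l"
      have "\<chi>\<chi> I0 (q j) = c (p j)" using same[OF jj(1)] unfolding q_def c_def by simp
      moreover have "\<chi>\<chi> I0 (q j') = c (p j')" using same[OF jj(2)] unfolding q_def c_def by simp
      ultimately show "\<chi>\<chi> I0 (q j) = \<chi>\<chi> I0 (q j')" using samec jj by simp
    qed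
    have D0: "D \<zero>\<^bsub>M\<^esub> = (\<lambda>i\<in>{1..t}. \<zero>\<^bsub>M\<^esub>)"
      using dcomp_lin[OF modM fin subs ds, of "{}" "\<lambda>_. \<zero>\<^bsub>R\<^esub>" "\<lambda>_. \<zero>\<^bsub>M\<^esub>"]
      unfolding D_def by simp
    have q2: "\<forall>i'<k. (\<Oplus>\<^bsub>M\<^esub> j\<in>{..<l}. A i' j \<odot>\<^bsub>M\<^esub> q j) = \<zero>\<^bsub>M\<^esub>"
    proof (intro allI impI)
      fix i' assume i': "i' < k"
      have "D (\<Oplus>\<^bsub>M\<^esub> j\<in>{..<l}. A i' j \<odot>\<^bsub>M\<^esub> p j) = (\<lambda>i\<in>{1..t}. \<Oplus>\<^bsub>M\<^esub> j\<in>{..<l}. A i' j \<odot>\<^bsub>M\<^esub> D (p j) i)"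
        unfolding D_def using Ar i' p(1) by (intro dcomp_lin[OF modM fin subs ds]) auto
      then have "(\<lambda>i\<in>{1..t}. \<Oplus>\<^bsub>M\<^esub> j\<in>{..<l}. A i' j \<odot>\<^bsub>M\<^esub> D (p j) i) = (\<lambda>i\<in>{1..t}. \<zero>\<^bsub>M\<^esub>)"
        using p(2) i' D0 by simp
      then have "(\<lambda>i\<in>{1..t}. \<Oplus>\<^bsub>M\<^esub> j\<in>{..<l}. A i' j \<odot>\<^bsub>M\<^esub> D (p j) i) I0 = (\<lambda>i\<in>{1..t}. \<zero>\<^bsub>M\<^esub>) I0"
        by simp
      then show "(\<Oplus>\<^bsub>M\<^esub> j\<in>{..<l}. A i' j \<odot>\<^bsub>M\<^esub> q j) = \<zero>\<^bsub>M\<^esub>"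
        using I0(1) unfolding q_def by simp
    qed
    show False using chichi I0(1) q1 q2 q3 q4 by blast
  qed
qed

lemma part2:
  fixes M :: "('a,'b) module" and A :: "nat \<Rightarrow> nat \<Rightarrow> 'a" and k l t :: nat
  assumes modM: "module R M" and Ar: "\<forall>i<k. \<forall>j<l. A i j \<in> carrier R"
   and subs: "\<forall>i\<in>{1..t}. submodule (Ms i) R M" and ds: "is_direct_sum M Ms {1..t}"
  shows "partition_regular M A k l \<longleftrightarrow> (\<exists>i\<in>{1..t}. partition_regular (submodule_module M (Ms i)) A k l)"
proof
  interpret M: module R M by fact
  assume "\<exists>i\<in>{1..t}. partition_regular (submodule_module M (Ms i)) A k l"
  then obtain i where i: "i \<in> {1..t}" and pri: "partition_regular (submodule_module M (Ms i)) A k l" by blast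
  have si: "submodule (Ms i) R M" using subs i by blast
  have sub: "Ms i \<subseteq> carrier M" using M.submoduleE(1)[OF si] .
  show "partition_regular M A k l"
    unfolding partition_regular_def
  proof (intro allI impI)
    fix r :: nat assume "1 \<le> r"
    then have prc: "partition_regular_colours (submodule_module M (Ms i)) A k l r"
      using pri unfolding partition_regular_def by blast
    show "partition_regular_colours M A k l r"
      unfolding partition_regular_colours_def
    proof
      fix \<chi> assume chi: "\<chi> \<in> carrier M \<rightarrow> {1..r}"
      have chi': "\<chi> \<in> carrier (submodule_module M (Ms i)) \<rightarrow> {1..r}"
        using sub chi by (auto simp: submodule_module_def)
      have "\<exists>p. (\<forall>j<l. p j \<in> carrier (submodule_module M (Ms i))) \<and>
        (\<forall>i'<k. (\<Oplus>\<^bsub>submodule_module M (Ms i)\<^esub> j\<in>{..<l}. A i' j \<odot>\<^bsub>submodule_module M (Ms i)\<^esub> p j) = \<zero>\<^bsub>submodule_module M (Ms i)\<^esub>) \<and>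
        (\<exists>j<l. p j \<noteq> \<zero>\<^bsub>submodule_module M (Ms i)\<^esub>) \<and>
        (\<forall>j<l. \<forall>j'<l. \<chi> (p j) = \<chi> (p j'))"
        using prc chi' unfolding partition_regular_colours_def by (rule bspec)
      then obtain p where p: "\<forall>j<l. p j \<in> carrier (submodule_module M (Ms i))"
        "\<forall>i'<k. (\<Oplus>\<^bsub>submodule_module M (Ms i)\<^esub> j\<in>{..<l}. A i' j \<odot>\<^bsub>submodule_module M (Ms i)\<^esub> p j) = \<zero>\<^bsub>submodule_module M (Ms i)\<^esub>"
        "\<exists>j<l. p j \<noteq> \<zero>\<^bsub>submodule_module M (Ms i)\<^esub>"
        "\<forall>j<l. \<forall>j'<l. \<chi> (p j) = \<chi> (p j')"
        by blast
      have pN: "\<forall>j<l. p j \<in> Ms i" using p(1) by (simp add: submodule_module_def)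
      show "\<exists>p. (\<forall>j<l. p j \<in> carrier M) \<and>
            (\<forall>i<k. (\<Oplus>\<^bsub>M\<^esub> j\<in>{..<l}. A i j \<odot>\<^bsub>M\<^esub> p j) = \<zero>\<^bsub>M\<^esub>) \<and>
            (\<exists>j<l. p j \<noteq> \<zero>\<^bsub>M\<^esub>) \<and> (\<forall>j<l. \<forall>j'<l. \<chi> (p j) = \<chi> (p j'))"
      proof (rule exI[of _ p], intro conjI)
        show "\<forall>j<l. p j \<in> carrier M" using pN sub by blast
        show "\<forall>i<k. (\<Oplus>\<^bsub>M\<^esub> j\<in>{..<l}. A i j \<odot>\<^bsub>M\<^esub> p j) = \<zero>\<^bsub>M\<^esub>"
          using sub_eqs[OF modM si Ar pN] p(2) by blast
        show "\<exists>j<l. p j \<noteq> \<zero>\<^bsub>M\<^esub>" using p(3) by (simp add: submodule_module_def)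
        show "\<forall>j<l. \<forall>j'<l. \<chi> (p j) = \<chi> (p j')" by fact
      qed
    qed
  qed
next
  show "partition_regular M A k l \<Longrightarrow> \<exists>i\<in>{1..t}. partition_regular (submodule_module M (Ms i)) A k l"
    using part2_hard[OF modM Ar subs ds] by blast
qed


theorem proposition1p6:
  fixes R :: "'a ring" and M :: "('a, 'b) module" and N :: "'b set"
    and A :: "nat \<Rightarrow> nat \<Rightarrow> 'a" and k l r s :: nat
  assumes "module R M"
    and "submodule N R M"
    and "\<forall>i<k. \<forall>j<l. A i j \<in> carrier R"
    and "r \<ge> 1" and "s \<ge> 1"
  shows "(partition_regular_colours M A k l (r + s) \<longrightarrow>
            partition_regular_colours (submodule_module M N) A k l r \<or>
            partition_regular_colours (quotient_module M N) A k l s)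
       \<and> (\<forall>(t::nat) (Ms :: nat \<Rightarrow> 'b set).
            (\<forall>i\<in>{1..t}. submodule (Ms i) R M) \<and> is_direct_sum M Ms {1..t} \<longrightarrow>
            (partition_regular M A k l \<longleftrightarrow>
             (\<exists>i\<in>{1..t}. partition_regular (submodule_module M (Ms i)) A k l)))"
proof (intro conjI impI allI)
  show "partition_regular_colours (submodule_module M N) A k l r \<or>
            partition_regular_colours (quotient_module M N) A k l s"
    if "partition_regular_colours M A k l (r + s)"
    using part1[OF assms(1,2,3) that] .
  fix t :: nat and Ms :: "nat \<Rightarrow> 'b set"
  assume h: "(\<forall>i\<in>{1..t}. submodule (Ms i) R M) \<and> is_direct_sum M Ms {1..t}"
  show "partition_regular M A k l \<longleftrightarrow> (\<exists>i\<in>{1..t}. partition_regular (submodule_module M (Ms i)) A k l)"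
    using part2[OF assms(1,3)] h by blast
qed

end
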